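(* Consider a repeater chain in the model described in the context with $M+N+1$ nodes labelled $1,\dots,M+N+1$ and elementary-link fidelity $F$. Suppose nodes $1,\dots,M$ are at fixed locations with fixed distances between consecutive ones, and the $N$ repeater nodes $M+1,\dots,M+N$ between nodes $M$ and $M+N+1$ are placed along a curve that can be freely chosen but whose length can be no shorter than $L_{\min}$. Let $\ell_i\ge0$ be the distance between nodes $M+i-1$ and $M+i$ for $i=1,\dots,N+1$, with $\sum_i\ell_i\ge L_{\min}$. Suppose nodes $1,\dots,M-1$ have memory coherence time $T$, while nodes $M,\dots,M+N+1$ have perfect quantum memory. Then the secret-key rate $\mathrm{SKR}$ is maximal when $\sum_i\ell_i=L_{\min}$ and $\ell_i=L_{\min}/(N+1)$ for all $i$.
   Context: Repeater-chain model (swap-ASAP, synchronized attempts). Edge $j$ connects nodes $j$ and $j+1$ and has length $l_j\ge0$ (km). Entanglement generation proceeds in synchronized rounds of duration $t_{\mathrm{att}}=\frac1c\max_jl_j$, $c=200{,}000$ km/s. In each round, each edge not yet successful attempts, succeeding independently with probability $p_j=10^{-\alpha l_j/10}$, $\alpha=0.2\ \mathrm{km}^{-1}$; the number of rounds $X_j$ until edge $j$ succeeds is geometric on $\{1,2,\dots\}$ with parameter $p_j$, independently across edges. Edge $j$ completes at time $t_j=t_{\mathrm{att}}X_j$, and the chain completes at $T_{\mathrm{done}}=t_{\mathrm{att}}\max_jX_j$; the entangling rate is $R=1/\mathbb E[T_{\mathrm{done}}]$. Each successful edge produces the two-qubit Werner state $W_{w_0}=w_0|\phi^+\rangle\langle\phi^+|+(1-w_0)\mathbb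 1/4$ with $w_0=(4F-1)/3$. Each repeater node (every node other than the two end nodes) performs entanglement swapping as soon as both of its links exist; meanwhile a stored qubit $k$ held for time $t$ in a memory with coherence time $T$ undergoes $\rho\mapsto e^{-t/T}\rho+(1-e^{-t/T})\frac{\mathbb 1_2}{2}\otimes\mathrm{Tr}_k\rho$; a node with perfect memory undergoes no such noise, and end nodes measure immediately and suffer no memory noise. Consequently, given the completion times, the end-to-end state is the Werner state with parameter $w_{e2e}=w_0^{K}\prod_{i}e^{-|t_i-t_{i-1}|/T}$, where $K$ is the number of edges and the product is over repeater nodes $i$ with imperfect memory (node $i$ sitting between edges $i-1$ and $i$); the delivered state is the Werner state with parameter $\mathbb E[w_{e2e}]$. Its quantum bit error rates are $Q_X=Q_Z=(1-\mathbb E[w_{e2e}])/2$, the secret-key fraction is $\mathrm{SKF}=\max(0,1-h(Q_X)-h(Q_Z))$ with $h(x)=-x\log_2x-(1-x)\log_2(1-x)$, and the secret-key rate is $\mathrm{SKR}=R\cdot\mathrm{SKF}$. *)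

theory Defs
  imports "HOL-Probability.Probability"
begin

text \<open>Repeater-chain model (swap-ASAP, synchronized attempts).
  A chain with K edges is given by the list ls of edge lengths (km):
  edge j (1 \<le> j \<le> K) has length ls ! (j-1) and connects nodes j and j+1.
  Nodes are labelled 1..K+1; nodes 1 and K+1 are end nodes, 2..K are repeaters.\<close>

definition light_speed :: real where "light_speed = 200000"
definition att_coeff :: real where "att_coeff = 0.2"

definition succ_prob :: "real \<Rightarrow> real" where
  "succ_prob l = 10 powr (- att_coeff * l / 10)"

text \<open>duration of one synchronized round\<close>
definition t_att :: "real list \<Rightarrow> real" where
  "t_att ls = Max (set ls) / light_speed"

text \<open>joint law of the numbers of rounds (X_1,...,X_K), independent geometrics on {1,2,...}\<close>
fun rounds_pmf :: "real list \<Rightarrow> nat list pmf" where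
  "rounds_pmf [] = return_pmf []"
| "rounds_pmf (l # ls) =
     bind_pmf (geometric_pmf (succ_prob l)) (\<lambda>x.
     bind_pmf (rounds_pmf ls) (\<lambda>xs. return_pmf (Suc x # xs)))"

definition ent_rate :: "real list \<Rightarrow> real" where
  "ent_rate ls = 1 / measure_pmf.expectation (rounds_pmf ls)
                       (\<lambda>xs. t_att ls * real (Max (set xs)))"

definition werner_param :: "real \<Rightarrow> real" where
  "werner_param F = (4 * F - 1) / 3"

text \<open>end-to-end Werner parameter given the rounds xs; Imp is the set of node labels
  whose memory is imperfect with coherence time T (all other nodes perfect).
  Completion time of edge j is t_j = t_att * X_j, with X_j = xs ! (j-1).\<close>
definition w_e2e :: "real list \<Rightarrow> real \<Rightarrow> real \<Rightarrow> nat set \<Rightarrow> nat list \<Rightarrow> real" where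
  "w_e2e ls F T Imp xs =
     werner_param F ^ length ls *
     (\<Prod>i \<in> {i \<in> {2..length ls}. i \<in> Imp}.
        exp (- \<bar>t_att ls * real (xs ! (i - 1)) - t_att ls * real (xs ! (i - 2))\<bar> / T))"

definition exp_w :: "real list \<Rightarrow> real \<Rightarrow> real \<Rightarrow> nat set \<Rightarrow> real" where
  "exp_w ls F T Imp = measure_pmf.expectation (rounds_pmf ls) (w_e2e ls F T Imp)"

definition bin_entropy :: "real \<Rightarrow> real" where
  "bin_entropy x = - x * log 2 x - (1 - x) * log 2 (1 - x)"

definition SKF :: "real list \<Rightarrow> real \<Rightarrow> real \<Rightarrow> nat set \<Rightarrow> real" where
  "SKF ls F T Imp =
     (let Q = (1 - exp_w ls F T Imp) / 2 in max 0 (1 - bin_entropy Q - bin_entropy Q))"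

definition SKR :: "real list \<Rightarrow> real \<Rightarrow> real \<Rightarrow> nat set \<Rightarrow> real" where
  "SKR ls F T Imp = ent_rate ls * SKF ls F T Imp"

text \<open>chain of M+N+1 nodes: fixed edges d 1..d (M-1) between nodes 1..M,
  then the free edges l 1..l (N+1) between nodes M..M+N+1\<close>
definition chain_lengths :: "nat \<Rightarrow> nat \<Rightarrow> (nat \<Rightarrow> real) \<Rightarrow> (nat \<Rightarrow> real) \<Rightarrow> real list" where
  "chain_lengths M N d l = map d [1..<M] @ map l [1..<N+2]"

end

theory Submission
  imports Defs
begin

lemma succ_prob_pos: "0 < succ_prob l"
  by (simp add: succ_prob_def)

lemma succ_prob_le1: "0 \<le> l \<Longrightarrow> succ_prob l \<le> 1"
proof -
  assume "0 \<le> l"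
  then have "10 powr (- att_coeff * l / 10) \<le> 10 powr 0"
    by (intro powr_mono) (auto simp: att_coeff_def)
  then show ?thesis by (simp add: succ_prob_def)
qed

definition phi :: "nat \<Rightarrow> real \<Rightarrow> real" where
  "phi n l = 1 - (1 - succ_prob l)^n"

lemma geom_less:
  assumes "0 < p" "p \<le> 1"
  shows "emeasure (measure_pmf (geometric_pmf p)) {..<n} = ennreal (1 - (1-p)^n)"
proof -
  have "measure (measure_pmf (geometric_pmf p)) {..<n} = (\<Sum>k<n. (1-p)^k * p)"
    using assms by (simp add: measure_measure_pmf_finite)
  also have "\<dots> = (\<Sum>k<n. (1-p)^k) * p" by (simp add: sum_distrib_right)
  also have "\<dots> = 1 - (1-p)^n" using assms by (simp add: sum_gp_strict)
  finally show ?thesis by (simp add: measure_pmf.emeasure_eq_measure)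
qed

lemma rounds_all_le:
  "(\<forall>l\<in>set ls. 0 \<le> l) \<Longrightarrow>
   emeasure (measure_pmf (rounds_pmf ls)) {xs. \<forall>x\<in>set xs. x \<le> n} = ennreal (\<Prod>l\<leftarrow>ls. phi n l)"
proof (induction ls)
  case Nil
  then show ?case by simp
next
  case (Cons l ls)
  let ?C = "{xs. \<forall>x\<in>set xs. x \<le> n}"
  have p: "0 < succ_prob l" "succ_prob l \<le> 1" using Cons.prems succ_prob_pos succ_prob_le1 by auto
  have IH: "emeasure (measure_pmf (rounds_pmf ls)) ?C = ennreal (\<Prod>l\<leftarrow>ls. phi n l)"
    using Cons by auto
  have nn: "0 \<le> (\<Prod>l\<leftarrow>ls. phi n l)"
    using Cons.prems
    by (intro prod_list_nonneg) (auto simp: phi_def intro!: power_le_one succ_prob_le1 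
         simp: succ_prob_pos less_imp_le)
  have "emeasure (measure_pmf (rounds_pmf (l # ls))) ?C
      = (\<integral>\<^sup>+x. (\<integral>\<^sup>+xs. indicator ?C (Suc x # xs) \<partial>rounds_pmf ls) \<partial>geometric_pmf (succ_prob l))"
    by simp
  also have "\<dots> = (\<integral>\<^sup>+x. indicator {..<n} x * emeasure (measure_pmf (rounds_pmf ls)) ?C \<partial>geometric_pmf (succ_prob l))"
  proof (intro nn_integral_cong)
    fix x
    have "(\<lambda>xs. indicator ?C (Suc x # xs) :: ennreal) = (\<lambda>xs. indicator {..<n} x * indicator ?C xs)"
      by (auto simp: indicator_def)
    then show "(\<integral>\<^sup>+xs. indicator ?C (Suc x # xs) \<partial>rounds_pmf ls) = indicator {..<n} x * emeasure (measure_pmf (rounds_pmf ls)) ?C"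
      by (simp add: nn_integral_cmult)
  qed
  also have "\<dots> = emeasure (measure_pmf (rounds_pmf ls)) ?C * emeasure (measure_pmf (geometric_pmf (succ_prob l))) {..<n}"
    by (subst mult.commute) (simp add: nn_integral_cmult)
  also have "\<dots> = ennreal (phi n l * (\<Prod>l\<leftarrow>ls. phi n l))"
  proof -
    have "(1 - succ_prob l)^n \<le> 1" using p by (intro power_le_one) auto
    then show ?thesis
    using p nn IH by (simp add: geom_less phi_def ennreal_mult[symmetric] mult.commute)
  qed
  finally show ?case by simp
qed

definition cc :: real where "cc = ln 10 / 50"

lemma cc_pos: "cc > 0" by (simp add: cc_def)

lemma succ_prob_exp: "succ_prob l = exp (- cc * l)"
  by (simp add: succ_prob_def powr_def att_coeff_def cc_def)

lemma phi_exp: "phi n y = 1 - (1 - exp (- cc * y))^n"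
  by (simp add: phi_def succ_prob_exp)

lemma phi_pos: "0 \<le> y \<Longrightarrow> n \<ge> 1 \<Longrightarrow> 0 < phi n y"
proof -
  assume y: "0 \<le> y" and n: "n \<ge> 1"
  have e: "0 < exp (- cc * y)" "exp (- cc * y) \<le> 1" using y cc_pos by auto
  then have "(1 - exp (- cc * y))^n < 1" using n
    by (intro power_less_one_iff[THEN iffD2] ) auto
  then show ?thesis by (simp add: phi_exp)
qed

lemma phi_nonneg: "0 \<le> y \<Longrightarrow> 0 \<le> phi n y"
proof -
  assume y: "0 \<le> y"
  have e: "0 < exp (- cc * y)" "exp (- cc * y) \<le> 1" using y cc_pos by auto
  then have "(1 - exp (- cc * y))^n \<le> 1" by (intro power_le_one) auto
  then show ?thesis by (simp add: phi_exp)
qed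

lemma phi_mono: "0 \<le> x \<Longrightarrow> x \<le> y \<Longrightarrow> phi n y \<le> phi n x"
proof -
  assume xy: "0 \<le> x" "x \<le> y"
  have "exp (- cc * y) \<le> exp (- cc * x)" using xy cc_pos by (simp add: mult_left_mono)
  moreover have "exp (- cc * x) \<le> 1" using xy cc_pos by simp
  ultimately have "(1 - exp (- cc * x))^n \<le> (1 - exp (- cc * y))^n"
    by (intro power_mono) auto
  then show ?thesis by (simp add: phi_exp)
qed

lemma ratio_mono:
  fixes v w :: real
  assumes "0 \<le> v" "v \<le> w"
  shows "v^(n-1) / (\<Sum>k<n. v^k) \<le> w^(n-1) / (\<Sum>k<n. w^k)"
proof (cases "n = 0")
  case True then show ?thesis by simp
next
  case False
  have Sv: "0 < (\<Sum>k<n. v^k)" and Sw: "0 < (\<Sum>k<n. w^k)"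
    using False assms by (auto intro!: sum_pos2[of _ 0] simp: )
  have "v^(n-1) * (\<Sum>k<n. w^k) \<le> w^(n-1) * (\<Sum>k<n. v^k)"
    unfolding sum_distrib_left
  proof (intro sum_mono)
    fix k assume k: "k \<in> {..<n}"
    have "v^(n-1) * w^k = v^k * (v^(n-1-k) * w^k)"
      using k by (simp add: power_add[symmetric] mult.assoc)
    also have "\<dots> \<le> v^k * (w^(n-1-k) * w^k)"
      using assms by (intro mult_left_mono mult_right_mono power_mono) auto
    also have "\<dots> = w^(n-1) * v^k"
      using k by (simp add: power_add[symmetric] mult.commute)
    finally show "v^(n-1) * w^k \<le> w^(n-1) * v^k" .
  qed
  then show ?thesis using Sv Sw by (simp add: divide_simps mult.commute)
qed

definition fder :: "nat \<Rightarrow> real \<Rightarrow> real" where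
  "fder n y = cc * real n * (1 - exp (- cc * y))^(n-1) / (\<Sum>k<n. (1 - exp (- cc * y))^k)"

lemma f_deriv:
  assumes "0 \<le> y" "n \<ge> 1"
  shows "((\<lambda>y. - ln (phi n y)) has_real_derivative fder n y) (at y)"
proof -
  define v where "v = 1 - exp (- cc * y)"
  define S where "S = (\<Sum>k<n. v^k)"
  have ph: "0 < phi n y" using phi_pos assms by auto
  have pe: "phi n y = exp (- cc * y) * S"
    unfolding phi_exp S_def using one_diff_power_eq[of v n] by (simp add: v_def)
  have d: "((\<lambda>y. - ln (1 - (1 - exp (- cc * y))^n)) has_real_derivative
      - ((- (real n * (1 - exp (- cc * y))^(n-1) * (exp (- cc * y) * cc))) / (1 - (1 - exp (- cc * y))^n))) (at y)"
    using ph unfolding phi_exp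
    by (auto intro!: derivative_eq_intros simp: field_simps)
  have "- ((- (real n * (1 - exp (- cc * y))^(n-1) * (exp (- cc * y) * cc))) / (1 - (1 - exp (- cc * y))^n))
        = fder n y"
  proof -
    have e: "0 < exp (- cc * y)" by simp
    have Spos: "0 < S" using pe ph e by (metis zero_less_mult_pos)
    have eq: "1 - v^n = exp (- cc * y) * S" using pe by (simp add: phi_exp v_def)
    have "- ((- (real n * v^(n-1) * (exp (- cc * y) * cc))) / (1 - v^n)) = cc * real n * v^(n-1) / S"
      unfolding eq using e Spos by (simp add: field_simps)
    then show ?thesis unfolding fder_def v_def[symmetric] S_def[symmetric] .
  qed
  then show ?thesis using d unfolding phi_exp by simp
qed

lemma fder_mono:
  assumes "0 \<le> x" "x \<le> y"
  shows "fder n x \<le> fder n y"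
proof -
  have "exp (- cc * y) \<le> exp (- cc * x)" using assms cc_pos by (simp add: mult_left_mono)
  moreover have "exp (- cc * x) \<le> 1" using assms cc_pos by simp
  ultimately have "(1 - exp (- cc * x))^(n-1) / (\<Sum>k<n. (1 - exp (- cc * x))^k)
     \<le> (1 - exp (- cc * y))^(n-1) / (\<Sum>k<n. (1 - exp (- cc * y))^k)"
    by (intro ratio_mono) auto
  then show ?thesis unfolding fder_def using cc_pos
    by (simp add: mult_left_mono times_divide_eq_right[symmetric] del: times_divide_eq_right)
qed

lemma f_convex: "n \<ge> 1 \<Longrightarrow> convex_on {0..} (\<lambda>y. - ln (phi n y))"
  by (rule convex_on_realI[where f'="fder n"]) (auto intro: f_deriv fder_mono)

lemma prod_phi_le:
  fixes l :: "nat \<Rightarrow> real"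
  assumes l0: "\<forall>i\<in>{1..N+1}. l i \<ge> 0" and ls: "(\<Sum>i=1..N+1. l i) \<ge> Lmin" and Lp: "Lmin > 0"
  shows "(\<Prod>i=1..N+1. phi n (l i)) \<le> phi n (Lmin / real (N+1)) ^ (N+1)"
proof (cases "n = 0")
  case True
  then show ?thesis by (simp add: phi_def)
next
  case False
  then have n: "n \<ge> 1" by simp
  define I where "I = {1..N+1}"
  define a where "a = 1 / real (N+1)"
  define u where "u = Lmin / real (N+1)"
  define f where "f = (\<lambda>y. - ln (phi n y))"
  have u0: "0 \<le> u" using Lp by (simp add: u_def)
  have cI: "card I = N+1" by (simp add: I_def)
  have J: "f (\<Sum>i\<in>I. a *\<^sub>R l i) \<le> (\<Sum>i\<in>I. a * f (l i))"
    unfolding f_def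
    by (rule convex_on_sum[OF _ _ f_convex[OF n]]) (use l0 cI in \<open>auto simp: I_def a_def\<close>)
  have mean: "(\<Sum>i\<in>I. a *\<^sub>R l i) = (\<Sum>i\<in>I. l i) / real (N+1)"
    by (simp add: a_def sum_divide_distrib)
  have mge: "u \<le> (\<Sum>i\<in>I. l i) / real (N+1)"
    using ls by (simp add: u_def I_def divide_right_mono)
  have "f u \<le> f ((\<Sum>i\<in>I. l i) / real (N+1))"
    unfolding f_def using phi_mono[OF u0 mge, of n] phi_pos[OF u0 n]
      phi_pos[OF order_trans[OF u0 mge] n] by simp
  also have "\<dots> \<le> (\<Sum>i\<in>I. a * f (l i))" using J mean by simp
  also have "\<dots> = a * (\<Sum>i\<in>I. f (l i))" by (simp add: sum_distrib_left)
  finally have "real (N+1) * f u \<le> (\<Sum>i\<in>I. f (l i))"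
    by (simp add: a_def field_simps)
  then have le: "(\<Sum>i\<in>I. ln (phi n (l i))) \<le> real (N+1) * ln (phi n u)"
    by (simp add: f_def sum_negf)
  have pos: "\<And>i. i \<in> I \<Longrightarrow> 0 < phi n (l i)" using l0 n phi_pos by (auto simp: I_def)
  have "ln (\<Prod>i\<in>I. phi n (l i)) \<le> ln (phi n u ^ (N+1))"
  proof -
    have "ln (\<Prod>i\<in>I. phi n (l i)) = (\<Sum>i\<in>I. ln (phi n (l i)))"
      by (rule ln_prod) (use pos in \<open>force simp: I_def\<close>)+
    moreover have "ln (phi n u ^ (N+1)) = real (N+1) * ln (phi n u)" by (rule ln_realpow)
    ultimately show ?thesis using le by simp
  qed
  then have "(\<Prod>i\<in>I. phi n (l i)) \<le> phi n u ^ (N+1)"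
  proof -
    have "0 < (\<Prod>i\<in>I. phi n (l i))" using pos by (intro prod_pos) auto
    then show ?thesis using \<open>ln (\<Prod>i\<in>I. phi n (l i)) \<le> ln (phi n u ^ (N+1))\<close> phi_pos[OF u0 n]
      by simp
  qed
  then show ?thesis by (simp add: I_def u_def)
qed

lemma rounds_support:
  "xs \<in> set_pmf (rounds_pmf ls) \<Longrightarrow> length xs = length ls \<and> (\<forall>x\<in>set xs. 1 \<le> x)"
  by (induction ls arbitrary: xs) (auto simp: set_bind_pmf)

lemma rounds_take: "map_pmf (take (length A)) (rounds_pmf (A @ B)) = rounds_pmf A"
proof (induction A)
  case Nil
  then show ?case by simp
next
  case (Cons a A)
  have h: "\<And>y. map_pmf (take (Suc (length A))) (map_pmf ((#) y) (rounds_pmf (A @ B)))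
      = map_pmf ((#) y) (map_pmf (take (length A)) (rounds_pmf (A @ B)))"
    by (simp add: map_pmf_comp)
  show ?case
    apply (simp add: map_bind_pmf bind_map_pmf[symmetric] map_pmf_def[symmetric])
    apply (simp only: h Cons.IH)
    done
qed

lemma tail_sum:
  assumes "xs \<noteq> []"
  shows "ennreal (real (Max (set xs))) = (\<Sum>n. indicator {xs. \<not> (\<forall>x\<in>set xs. x \<le> n)} xs)"
proof -
  define m where "m = Max (set xs)"
  have "\<And>n. (\<not> (\<forall>x\<in>set xs. x \<le> n)) = (n < m)"
    using assms unfolding m_def by (simp add: Max_gr_iff not_le)
  then have "(\<lambda>n. indicator {xs. \<not> (\<forall>x\<in>set xs. x \<le> n)} xs :: ennreal) = (\<lambda>n. indicator {..<m} n)"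
    by (auto simp: indicator_def)
  moreover have "(\<Sum>n. indicator {..<m} n :: ennreal) = of_nat m"
    by (simp add: nn_integral_count_space_nat[symmetric] emeasure_count_space_finite)
  ultimately show ?thesis by (simp add: m_def ennreal_of_nat_eq_real_of_nat)
qed

lemma nn_max:
  assumes "ls \<noteq> []"
  shows "(\<integral>\<^sup>+xs. ennreal (real (Max (set xs))) \<partial>rounds_pmf ls)
       = (\<Sum>n. emeasure (measure_pmf (rounds_pmf ls)) {xs. \<not> (\<forall>x\<in>set xs. x \<le> n)})"
proof -
  have "(\<integral>\<^sup>+xs. ennreal (real (Max (set xs))) \<partial>rounds_pmf ls)
      = (\<integral>\<^sup>+xs. (\<Sum>n. indicator {xs. \<not> (\<forall>x\<in>set xs. x \<le> n)} xs) \<partial>rounds_pmf ls)"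
  proof (intro nn_integral_cong_AE AE_pmfI)
    fix xs assume "xs \<in> set_pmf (rounds_pmf ls)"
    then have "xs \<noteq> []" using rounds_support assms by fastforce
    then show "ennreal (real (Max (set xs))) = (\<Sum>n. indicator {xs. \<not> (\<forall>x\<in>set xs. x \<le> n)} xs)"
      by (rule tail_sum)
  qed
  also have "\<dots> = (\<Sum>n. (\<integral>\<^sup>+xs. indicator {xs. \<not> (\<forall>x\<in>set xs. x \<le> n)} xs \<partial>rounds_pmf ls))"
    by (rule nn_integral_suminf) simp
  also have "\<dots> = (\<Sum>n. emeasure (measure_pmf (rounds_pmf ls)) {xs. \<not> (\<forall>x\<in>set xs. x \<le> n)})"
    by simp
  finally show ?thesis .
qed

lemma prod_phi_nonneg: "\<forall>l\<in>set ls. 0 \<le> l \<Longrightarrow> 0 \<le> prod_list (map (phi n) ls)"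
  by (induction ls) (auto intro!: mult_nonneg_nonneg phi_nonneg)

lemma emeasure_tail:
  assumes "\<forall>l\<in>set ls. 0 \<le> l"
  shows "emeasure (measure_pmf (rounds_pmf ls)) {xs. \<not> (\<forall>x\<in>set xs. x \<le> n)}
       = ennreal (1 - prod_list (map (phi n) ls))"
proof -
  let ?C = "{xs. \<forall>x\<in>set xs. x \<le> n}"
  have "ennreal (measure (measure_pmf (rounds_pmf ls)) ?C) = ennreal (prod_list (map (phi n) ls))"
    using rounds_all_le[OF assms, of n] by (simp add: measure_pmf.emeasure_eq_measure)
  then have m: "measure (measure_pmf (rounds_pmf ls)) ?C = prod_list (map (phi n) ls)"
    using prod_phi_nonneg[OF assms] by (simp add: ennreal_inj)
  have "{xs. \<not> (\<forall>x\<in>set xs. x \<le> n)} = space (measure_pmf (rounds_pmf ls)) - ?C" by auto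
  then have "measure (measure_pmf (rounds_pmf ls)) {xs. \<not> (\<forall>x\<in>set xs. x \<le> n)} = 1 - prod_list (map (phi n) ls)"
    using measure_pmf.prob_compl[of ?C "rounds_pmf ls"] m by simp
  then show ?thesis by (simp add: measure_pmf.emeasure_eq_measure)
qed

lemma rate_compare:
  assumes ne1: "ls1 \<noteq> []" and ne2: "ls2 \<noteq> []"
    and p1: "\<forall>l\<in>set ls1. 0 \<le> l" and p2: "\<forall>l\<in>set ls2. 0 \<le> l"
    and pr: "\<And>n. prod_list (map (phi n) ls1) \<le> prod_list (map (phi n) ls2)"
    and t2: "0 < t_att ls2" and t12: "t_att ls2 \<le> t_att ls1"
  shows "ent_rate ls1 \<le> ent_rate ls2"
proof -
  define f :: "nat list \<Rightarrow> real" where "f = (\<lambda>xs. real (Max (set xs)))"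
  define E1 where "E1 = measure_pmf.expectation (rounds_pmf ls1) f"
  define E2 where "E2 = measure_pmf.expectation (rounds_pmf ls2) f"
  have r1: "ent_rate ls1 = 1 / (t_att ls1 * E1)" by (simp add: ent_rate_def E1_def f_def)
  have r2: "ent_rate ls2 = 1 / (t_att ls2 * E2)" by (simp add: ent_rate_def E2_def f_def)
  have E2nn: "0 \<le> E2" unfolding E2_def f_def by (rule integral_nonneg_AE) simp
  have nnle: "(\<integral>\<^sup>+xs. ennreal (f xs) \<partial>rounds_pmf ls2) \<le> (\<integral>\<^sup>+xs. ennreal (f xs) \<partial>rounds_pmf ls1)"
    unfolding f_def nn_max[OF ne1] nn_max[OF ne2] emeasure_tail[OF p1] emeasure_tail[OF p2]
    by (intro suminf_le ennreal_leI) (auto simp: pr)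
  show ?thesis
  proof (cases "integrable (measure_pmf (rounds_pmf ls1)) f")
    case False
    then have "E1 = 0" unfolding E1_def by (rule not_integrable_integral_eq)
    then show ?thesis using r1 r2 t2 E2nn by simp
  next
    case True
    have n1: "(\<integral>\<^sup>+xs. ennreal (f xs) \<partial>rounds_pmf ls1) = ennreal E1"
      unfolding E1_def using True by (intro nn_integral_eq_integral) (auto simp: f_def)
    have "integrable (measure_pmf (rounds_pmf ls2)) f"
      using nnle n1 by (intro integrableI_nonneg) (auto simp: f_def top.not_eq_extremum le_less_trans)
    then have n2: "(\<integral>\<^sup>+xs. ennreal (f xs) \<partial>rounds_pmf ls2) = ennreal E2"
      and I2: "integrable (measure_pmf (rounds_pmf ls2)) f"
      unfolding E2_def by (auto intro!: nn_integral_eq_integral simp: f_def)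
    have E1nn: "0 \<le> E1" unfolding E1_def f_def by (rule integral_nonneg_AE) simp
    have E12: "E2 \<le> E1" using nnle n1 n2 E1nn by simp
    have "1 \<le> E2" unfolding E2_def
    proof (rule measure_pmf.integral_ge_const[OF I2], rule AE_pmfI)
      fix xs assume xs: "xs \<in> set_pmf (rounds_pmf ls2)"
      then have "xs \<noteq> []" "\<forall>x\<in>set xs. 1 \<le> x" using rounds_support[OF xs] ne2 by auto
      then obtain x where "x \<in> set xs" "1 \<le> x" by (cases xs) auto
      then have "1 \<le> Max (set xs)" by (meson List.finite_set Max_ge order_trans)
      then show "1 \<le> f xs" by (simp add: f_def)
    qed
    then have pos: "0 < t_att ls2 * E2" using t2 by simp
    have "t_att ls2 * E2 \<le> t_att ls1 * E1"
      using t2 t12 E12 E2nn by (intro mult_mono) auto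
    then show ?thesis unfolding r1 r2 using pos
      by (intro divide_left_mono) auto
  qed
qed

lemma h_deriv:
  assumes "0 < x" "x < 1"
  shows "(bin_entropy has_real_derivative (log 2 (1 - x) - log 2 x)) (at x)"
proof -
  have "((\<lambda>x. - x * log 2 x - (1 - x) * log 2 (1 - x)) has_real_derivative
        (- (1 * log 2 x + x * inverse (ln 2 * x)) - (- 1 * log 2 (1 - x) + (1 - x) * (- inverse (ln 2 * (1 - x))))))
        (at x)"
    using assms by (auto intro!: derivative_eq_intros DERIV_log)
  moreover have eq: "(- (1 * log 2 x + x * inverse (ln 2 * x)) - (- 1 * log 2 (1 - x) + (1 - x) * (- inverse (ln 2 * (1 - x)))))
     = log 2 (1 - x) - log 2 x"
    using assms by (simp add: field_simps)
  ultimately show ?thesis unfolding bin_entropy_def[abs_def] by metis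
qed

lemma h_nonneg: "0 \<le> x \<Longrightarrow> x \<le> 1 \<Longrightarrow> 0 \<le> bin_entropy x"
proof -
  assume x: "0 \<le> x" "x \<le> 1"
  have a: "x * log 2 x \<le> 0"
  proof (cases "x = 0")
    case False
    then have "log 2 x \<le> 0" using x by simp
    then show ?thesis using x by (simp add: mult_nonneg_nonpos)
  qed simp
  have b: "(1 - x) * log 2 (1 - x) \<le> 0"
  proof (cases "x = 1")
    case False
    then have "log 2 (1 - x) \<le> 0" using x by simp
    then show ?thesis using x by (simp add: mult_nonneg_nonpos)
  qed simp
  show ?thesis using a b by (simp add: bin_entropy_def)
qed

lemma h_mono:
  assumes "0 \<le> a" "a \<le> b" "b \<le> 1/2"
  shows "bin_entropy a \<le> bin_entropy b"
proof (cases "a = 0")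
  case True
  then show ?thesis using h_nonneg[of b] assms by (simp add: bin_entropy_def)
next
  case False
  then have a0: "0 < a" using assms by simp
  show ?thesis
  proof (rule DERIV_nonneg_imp_increasing_open[OF assms(2)])
    fix x assume x: "a < x" "x < b"
    then have "0 < x" "x < 1" "x \<le> 1 - x" using a0 assms by auto
    then show "\<exists>y. (bin_entropy has_real_derivative y) (at x) \<and> 0 \<le> y"
      by (intro exI[of _ "log 2 (1 - x) - log 2 x"]) (auto intro: h_deriv)
  next
    show "continuous_on {a..b} bin_entropy"
    proof (rule DERIV_continuous_on)
      fix x assume "x \<in> {a..b}"
      then have "0 < x" "x < 1" using a0 assms by auto
      then show "(bin_entropy has_field_derivative (log 2 (1 - x) - log 2 x)) (at x within {a..b})"
        using h_deriv has_field_derivative_at_within by blast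
    qed
  qed
qed

definition Gf :: "nat \<Rightarrow> real \<Rightarrow> real \<Rightarrow> nat \<Rightarrow> real \<Rightarrow> nat list \<Rightarrow> real" where
  "Gf K F T M t xs = werner_param F ^ K *
     (\<Prod>i \<in> {i \<in> {2..K}. i \<in> {1..M-1}}.
        exp (- \<bar>t * real (xs ! (i - 1)) - t * real (xs ! (i - 2))\<bar> / T))"

lemma w_e2e_Gf: "w_e2e ls F T {1..M-1} = Gf (length ls) F T M (t_att ls)"
  by (simp add: w_e2e_def Gf_def fun_eq_iff)

lemma Gf_take: "Gf K F T M t xs = Gf K F T M t (take (M-1) xs)"
  unfolding Gf_def by (rule arg_cong[where f="(*) _"], rule prod.cong) auto

lemma Gf_bounds:
  assumes "0 \<le> werner_param F" "werner_param F \<le> 1" "T > 0"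
  shows "0 \<le> Gf K F T M t xs" "Gf K F T M t xs \<le> 1"
proof -
  have p: "(\<Prod>i \<in> {i \<in> {2..K}. i \<in> {1..M-1}}.
        exp (- \<bar>t * real (xs ! (i - 1)) - t * real (xs ! (i - 2))\<bar> / T)) \<le> 1"
    using assms by (intro prod_le_1) auto
  have q: "werner_param F ^ K \<le> 1" using assms by (intro power_le_one) auto
  show "0 \<le> Gf K F T M t xs" using assms unfolding Gf_def by (auto intro!: mult_nonneg_nonneg prod_nonneg)
  show "Gf K F T M t xs \<le> 1" unfolding Gf_def
    using mult_mono[OF q p] assms by (simp add: prod_nonneg)
qed

lemma Gf_mono:
  assumes "0 \<le> werner_param F" "T > 0" "0 \<le> t2" "t2 \<le> t1"
  shows "Gf K F T M t1 xs \<le> Gf K F T M t2 xs"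
  unfolding Gf_def
proof (intro mult_left_mono prod_mono conjI)
  fix i
  have e1: "\<bar>t1 * real (xs ! (i - 1)) - t1 * real (xs ! (i - 2))\<bar> = t1 * \<bar>real (xs ! (i - 1)) - real (xs ! (i - 2))\<bar>"
    using assms by (simp add: right_diff_distrib[symmetric] abs_mult)
  have e2: "\<bar>t2 * real (xs ! (i - 1)) - t2 * real (xs ! (i - 2))\<bar> = t2 * \<bar>real (xs ! (i - 1)) - real (xs ! (i - 2))\<bar>"
    using assms by (simp add: right_diff_distrib[symmetric] abs_mult)
  have "t2 * \<bar>real (xs ! (i - 1)) - real (xs ! (i - 2))\<bar> \<le> t1 * \<bar>real (xs ! (i - 1)) - real (xs ! (i - 2))\<bar>"
    using assms by (intro mult_right_mono) auto
  then show "exp (- \<bar>t1 * real (xs ! (i - 1)) - t1 * real (xs ! (i - 2))\<bar> / T)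
    \<le> exp (- \<bar>t2 * real (xs ! (i - 1)) - t2 * real (xs ! (i - 2))\<bar> / T)"
    unfolding e1 e2 using assms by (simp add: divide_right_mono)
qed (use assms in auto)

lemma Gf_integrable:
  assumes "0 \<le> werner_param F" "werner_param F \<le> 1" "T > 0"
  shows "integrable (measure_pmf p) (Gf K F T M t)"
  by (rule measure_pmf.integrable_const_bound[where B=1]) (use Gf_bounds[OF assms] in auto)

lemma expw_compare:
  assumes ls1: "ls1 = A @ B1" and ls2: "ls2 = A @ B2" and lA: "length A = M - 1"
    and lB: "length B1 = length B2"
    and w: "0 \<le> werner_param F" "werner_param F \<le> 1" and T: "T > 0"
    and t: "0 \<le> t_att ls2" "t_att ls2 \<le> t_att ls1"
  shows "exp_w ls1 F T {1..M-1} \<le> exp_w ls2 F T {1..M-1}"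
    and "0 \<le> exp_w ls1 F T {1..M-1}" and "exp_w ls2 F T {1..M-1} \<le> 1"
proof -
  define K where "K = length ls1"
  have K2: "length ls2 = K" using ls1 ls2 lB by (simp add: K_def)
  define G where "G = Gf K F T M (t_att ls2)"
  have marg: "\<And>B. measure_pmf.expectation (rounds_pmf (A @ B)) G = measure_pmf.expectation (rounds_pmf A) G"
  proof -
    fix B
    have "measure_pmf.expectation (rounds_pmf (A @ B)) G
        = measure_pmf.expectation (rounds_pmf (A @ B)) (\<lambda>xs. G (take (length A) xs))"
      unfolding G_def lA by (simp only: Gf_take[of K F T M _ "take (M - 1) _", symmetric] Gf_take[symmetric])
    also have "\<dots> = measure_pmf.expectation (map_pmf (take (length A)) (rounds_pmf (A @ B))) G"
      by simp
    finally show "measure_pmf.expectation (rounds_pmf (A @ B)) G = measure_pmf.expectation (rounds_pmf A) G"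
      by (simp add: rounds_take)
  qed
  have "exp_w ls1 F T {1..M-1} = measure_pmf.expectation (rounds_pmf ls1) (Gf K F T M (t_att ls1))"
    by (simp only: exp_w_def w_e2e_Gf K_def)
  also have "\<dots> \<le> measure_pmf.expectation (rounds_pmf ls1) G"
    unfolding G_def
    by (intro integral_mono Gf_integrable Gf_mono) (use w T t in auto)
  also have "\<dots> = measure_pmf.expectation (rounds_pmf ls2) G"
    unfolding ls1 ls2 marg ..
  also have "\<dots> = exp_w ls2 F T {1..M-1}"
    by (simp only: exp_w_def w_e2e_Gf K2 G_def)
  finally show "exp_w ls1 F T {1..M-1} \<le> exp_w ls2 F T {1..M-1}" .
  show "0 \<le> exp_w ls1 F T {1..M-1}"
    unfolding exp_w_def w_e2e_Gf by (intro integral_nonneg_AE AE_pmfI Gf_bounds) (use w T in auto)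
  show "exp_w ls2 F T {1..M-1} \<le> 1"
    unfolding exp_w_def w_e2e_Gf
    by (intro measure_pmf.integral_le_const Gf_integrable AE_pmfI Gf_bounds) (use w T in auto)
qed

lemma prod_upt: "prod_list (map f [1..<N+2]) = (\<Prod>i=1..N+1. f i)"
proof -
  have "prod_list (map f [1..<N+2]) = prod f (set [1..<N+2])"
    by (subst prod.distinct_set_conv_list) auto
  also have "set [1..<N+2] = {1..N+1}" by auto
  finally show ?thesis .
qed

lemma skf_mono:
  assumes "0 \<le> w1" "w1 \<le> w2" "w2 \<le> 1"
  shows "max 0 (1 - bin_entropy ((1 - w1) / 2) - bin_entropy ((1 - w1) / 2))
       \<le> max 0 (1 - bin_entropy ((1 - w2) / 2) - bin_entropy ((1 - w2) / 2))"
proof -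
  have "bin_entropy ((1 - w2) / 2) \<le> bin_entropy ((1 - w1) / 2)"
    using assms by (intro h_mono) auto
  then show ?thesis by simp
qed

theorem mainTheorem8:
  fixes M N :: nat and d l :: "nat \<Rightarrow> real" and F T Lmin :: real
  assumes "M \<ge> 1"
    and "\<forall>i\<in>{1..<M}. d i \<ge> 0"
    and "1/4 \<le> F" and "F \<le> 1"
    and "T > 0"
    and "Lmin > 0"
    and "\<forall>i\<in>{1..N+1}. l i \<ge> 0"
    and "(\<Sum>i=1..N+1. l i) \<ge> Lmin"
  shows "SKR (chain_lengths M N d l) F T {1..M-1}
         \<le> SKR (chain_lengths M N d (\<lambda>_. Lmin / real (N+1))) F T {1..M-1}"
proof -
  note dnn = assms(2) and Fl = assms(3) and Fu = assms(4) and T = assms(5) and Lp = assms(6)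
    and lnn = assms(7) and lsum = assms(8)
  define u where "u = Lmin / real (N+1)"
  have u0: "0 < u" using Lp by (simp add: u_def)
  define A where "A = map d [1..<M]"
  define ls1 where "ls1 = chain_lengths M N d l"
  define ls2 where "ls2 = chain_lengths M N d (\<lambda>_. u)"
  have ls1A: "ls1 = A @ map l [1..<N+2]" by (simp add: ls1_def A_def chain_lengths_def)
  have ls2A: "ls2 = A @ map (\<lambda>_. u) [1..<N+2]" by (simp add: ls2_def A_def chain_lengths_def)
  have lA: "length A = M - 1" by (simp add: A_def)
  have Ann: "\<forall>x\<in>set A. 0 \<le> x" using dnn by (auto simp: A_def)
  have p1: "\<forall>x\<in>set ls1. 0 \<le> x" using Ann lnn by (auto simp: ls1A)
  have p2: "\<forall>x\<in>set ls2. 0 \<le> x" using Ann u0 by (auto simp: ls2A)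
  have ne1: "ls1 \<noteq> []" by (simp add: ls1A)
  have ne2: "ls2 \<noteq> []" by (simp add: ls2A)
  obtain j where j: "j \<in> {1..N+1}" "u \<le> l j"
  proof (rule ccontr)
    assume "\<not> thesis"
    then have "\<forall>i\<in>{1..N+1}. l i < u" using that by force
    then have "(\<Sum>i=1..N+1. l i) < (\<Sum>i=1..N+1. u)" by (intro sum_strict_mono) auto
    also have "\<dots> = Lmin" by (simp add: u_def)
    finally show False using lsum by simp
  qed
  have "j \<in> set [1..<N+2]" using j by auto
  then have "l j \<in> set (map l [1..<N+2])" by (simp only: set_map imageI)
  then have ljin: "l j \<in> set ls1" unfolding ls1A set_append by blast
  have uin: "u \<in> set ls2" by (simp add: ls2A)
  have Mx: "Max (set ls2) \<le> Max (set ls1)"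
  proof (subst Max_le_iff, simp, simp add: ne2, intro ballI)
    fix y assume "y \<in> set ls2"
    then have "y \<in> set A \<or> y = u" by (auto simp: ls2A)
    then show "y \<le> Max (set ls1)"
    proof
      assume "y \<in> set A" then have "y \<in> set ls1" by (simp add: ls1A)
      then show ?thesis by simp
    next
      assume "y = u" then show ?thesis using j ljin by (meson List.finite_set Max_ge order_trans)
    qed
  qed
  have Mpos: "0 < Max (set ls2)" using uin u0 by (meson List.finite_set Max_ge less_le_trans)
  have t2: "0 < t_att ls2" using Mpos by (simp add: t_att_def light_speed_def)
  have t12: "t_att ls2 \<le> t_att ls1" using Mx by (simp add: t_att_def light_speed_def divide_right_mono)
  have pr: "\<And>n. prod_list (map (phi n) ls1) \<le> prod_list (map (phi n) ls2)"
  proof -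
    fix n
    have a: "prod_list (map (phi n) ls1) = prod_list (map (phi n) A) * (\<Prod>i=1..N+1. phi n (l i))"
      by (simp only: ls1A map_append prod_list.append map_map comp_def prod_upt)
    have b: "prod_list (map (phi n) ls2) = prod_list (map (phi n) A) * phi n u ^ (N+1)"
      by (simp only: ls2A map_append prod_list.append map_map comp_def prod_upt) simp
    show "prod_list (map (phi n) ls1) \<le> prod_list (map (phi n) ls2)"
      unfolding a b using prod_phi_le[OF lnn lsum Lp, of n] prod_phi_nonneg[OF Ann, of n]
      by (intro mult_left_mono) (auto simp: u_def)
  qed
  have rate: "ent_rate ls1 \<le> ent_rate ls2" by (rule rate_compare[OF ne1 ne2 p1 p2 pr t2 t12])
  have rate0: "0 \<le> ent_rate ls2"
  proof -
    have "0 \<le> measure_pmf.expectation (rounds_pmf ls2) (\<lambda>xs. t_att ls2 * real (Max (set xs)))"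
      using t2 by (intro integral_nonneg_AE) auto
    then show ?thesis by (simp add: ent_rate_def)
  qed
  have w: "0 \<le> werner_param F" "werner_param F \<le> 1" using Fl Fu by (auto simp: werner_param_def)
  have ew: "exp_w ls1 F T {1..M-1} \<le> exp_w ls2 F T {1..M-1}"
      "0 \<le> exp_w ls1 F T {1..M-1}" "exp_w ls2 F T {1..M-1} \<le> 1"
    using expw_compare[OF ls1A ls2A lA _ w T] t2 t12 by auto
  have skf: "SKF ls1 F T {1..M-1} \<le> SKF ls2 F T {1..M-1}"
    unfolding SKF_def Let_def using skf_mono[OF ew(2) ew(1) ew(3)] .
  have skf0: "0 \<le> SKF ls1 F T {1..M-1}" by (simp add: SKF_def Let_def)
  have "SKR ls1 F T {1..M-1} \<le> SKR ls2 F T {1..M-1}"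
    unfolding SKR_def using rate skf rate0 skf0 by (intro mult_mono) auto
  then show ?thesis by (simp add: ls1_def ls2_def u_def)
qed

end
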